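(* Let $(\varphi,\tau_0)\in C((-\infty,0],C(\Omega))\times C_+(\Omega)$, $r\in(0,+\infty]$, $A\in C((-\infty,r),C(\Omega))$ with $A=\varphi$ on $(-\infty,0]$, and let $\tau$ be the solution of (3.1). Assume there is $M>0$ with $\sup_{t\in[0,r)}\|A(t,\cdot)\|_\infty\le M$. Set $\tau_0^\infty:=\sup_{x}\tau_0(x)$, $\varphi_{\max}:=\sup_{t\in[-\tau_0^\infty,0]}\|\varphi(t,\cdot)\|_\infty$, $M_1:=\max\{M,\varphi_{\max}\}$, and $$\tau_{\min}:=\frac{\inf_{x\in\Omega}[\tau_0(x)f(\varphi_{\max})(x)]}{\sup_{x\in\Omega}f(-M_1)(x)},\qquad \tau_{\max}:=\frac{\sup_{x\in\Omega}[\tau_0(x)f(-\varphi_{\max})(x)]}{\inf_{x\in\Omega}f(M_1)(x)}.$$ Then $0\le\tau_{\min}\le\tau(t,x)\le\tau_{\max}$ for all $t\in[0,r)$ and $x\in\Omega$.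
   Context: $\Omega\subset\mathbb R^n$ compact, $C(\Omega)$ with sup norm, $C_+(\Omega)$ nonnegative functions. $f:C(\Omega)\to C(\Omega)$ is Lipschitz, $0<f(\phi)(x)\le M_f$ for a constant $M_f$, non-increasing for the pointwise order. A real constant $c$ is identified with the constant function $c$ on $\Omega$, so $f(c)\in C(\Omega)$. Equation (3.1): $\int_{t-\tau(t,x)}^tf(A(s,\cdot))(x)ds=\int_{-\tau_0(x)}^0f(\varphi(s,\cdot))(x)ds$ for $t\in[0,r)$, $x\in\Omega$; it has a unique solution $\tau:[0,r)\to C(\Omega)$ with $\tau\ge0$. *)

theory Defs
  imports "HOL-Analysis.Analysis"
begin

text \<open>Elements of C(Omega) are represented by functions 'a => real that are
continuous on Omega; only their values on Omega matter.\<close>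

definition supnorm :: "'a set \<Rightarrow> ('a \<Rightarrow> real) \<Rightarrow> real" where
  "supnorm \<Omega> u = (SUP x\<in>\<Omega>. \<bar>u x\<bar>)"

definition cont_into_C :: "real set \<Rightarrow> 'a::topological_space set \<Rightarrow> (real \<Rightarrow> 'a \<Rightarrow> real) \<Rightarrow> bool" where
  "cont_into_C T \<Omega> u \<longleftrightarrow>
     (\<forall>t\<in>T. continuous_on \<Omega> (u t)) \<and>
     (\<forall>t\<in>T. \<forall>e>0. \<exists>d>0. \<forall>s\<in>T. \<bar>s - t\<bar> < d \<longrightarrow> supnorm \<Omega> (\<lambda>x. u s x - u t x) < e)"

definition admissible_f :: "'a::topological_space set \<Rightarrow> (('a \<Rightarrow> real) \<Rightarrow> ('a \<Rightarrow> real)) \<Rightarrow> bool" where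
  "admissible_f \<Omega> f \<longleftrightarrow>
     (\<forall>u. continuous_on \<Omega> u \<longrightarrow> continuous_on \<Omega> (f u)) \<and>
     (\<exists>L. \<forall>u v. continuous_on \<Omega> u \<longrightarrow> continuous_on \<Omega> v \<longrightarrow>
          supnorm \<Omega> (\<lambda>x. f u x - f v x) \<le> L * supnorm \<Omega> (\<lambda>x. u x - v x)) \<and>
     (\<exists>Mf. \<forall>u. continuous_on \<Omega> u \<longrightarrow> (\<forall>x\<in>\<Omega>. 0 < f u x \<and> f u x \<le> Mf)) \<and>
     (\<forall>u v. continuous_on \<Omega> u \<longrightarrow> continuous_on \<Omega> v \<longrightarrow> (\<forall>x\<in>\<Omega>. u x \<le> v x) \<longrightarrow>
          (\<forall>x\<in>\<Omega>. f v x \<le> f u x))"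

end

theory Submission
  imports Defs
begin
lemma bdd_cont:
  fixes g :: "'a::topological_space \<Rightarrow> real"
  assumes "compact \<Omega>" "continuous_on \<Omega> g"
  shows "bdd_above (g ` \<Omega>)" "bdd_below (g ` \<Omega>)"
proof -
  have "bounded (g ` \<Omega>)" using assms compact_continuous_image compact_imp_bounded by blast
  then show "bdd_above (g ` \<Omega>)" "bdd_below (g ` \<Omega>)"
    by (auto intro: bounded_imp_bdd_above bounded_imp_bdd_below)
qed

lemma sn_ge:
  fixes u :: "'a::topological_space \<Rightarrow> real"
  assumes "compact \<Omega>" "continuous_on \<Omega> u" "x \<in> \<Omega>"
  shows "\<bar>u x\<bar> \<le> supnorm \<Omega> u"
proof -
  have "continuous_on \<Omega> (\<lambda>x. \<bar>u x\<bar>)" using assms(2) by (intro continuous_intros)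
  then have "bdd_above ((\<lambda>x. \<bar>u x\<bar>) ` \<Omega>)" by (rule bdd_cont(1)[OF assms(1)])
  then show ?thesis unfolding supnorm_def using assms(3) by (rule cSUP_upper2) simp
qed

lemma sn_le:
  assumes "\<Omega> \<noteq> {}" "\<forall>x\<in>\<Omega>. \<bar>u x\<bar> \<le> c"
  shows "supnorm \<Omega> u \<le> c"
  unfolding supnorm_def using assms by (intro cSUP_least) auto

lemma sn_nonneg:
  fixes u :: "'a::topological_space \<Rightarrow> real"
  assumes "compact \<Omega>" "\<Omega> \<noteq> {}" "continuous_on \<Omega> u"
  shows "0 \<le> supnorm \<Omega> u"
proof -
  obtain x where "x \<in> \<Omega>" using assms by blast
  then show ?thesis using sn_ge[OF assms(1,3)] by (meson abs_ge_zero order_trans)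
qed

lemma sn_tri:
  fixes u v :: "'a::topological_space \<Rightarrow> real"
  assumes "compact \<Omega>" "\<Omega> \<noteq> {}" "continuous_on \<Omega> u" "continuous_on \<Omega> v"
  shows "supnorm \<Omega> u \<le> supnorm \<Omega> v + supnorm \<Omega> (\<lambda>x. u x - v x)"
proof (rule sn_le[OF assms(2)], intro ballI)
  fix x assume x: "x \<in> \<Omega>"
  have "continuous_on \<Omega> (\<lambda>x. u x - v x)" using assms by (intro continuous_intros)
  then have "\<bar>u x - v x\<bar> \<le> supnorm \<Omega> (\<lambda>x. u x - v x)" using sn_ge[OF assms(1)] x by blast
  moreover have "\<bar>v x\<bar> \<le> supnorm \<Omega> v" using sn_ge[OF assms(1,4) x] .
  ultimately show "\<bar>u x\<bar> \<le> supnorm \<Omega> v + supnorm \<Omega> (\<lambda>x. u x - v x)" by linarith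
qed

lemma f_lip:
  fixes f :: "('a::topological_space \<Rightarrow> real) \<Rightarrow> ('a \<Rightarrow> real)"
  assumes "admissible_f \<Omega> f" "compact \<Omega>" "\<Omega> \<noteq> {}"
  shows "\<exists>K>0. \<forall>u v x. continuous_on \<Omega> u \<longrightarrow> continuous_on \<Omega> v \<longrightarrow> x \<in> \<Omega> \<longrightarrow>
            \<bar>f u x - f v x\<bar> \<le> K * supnorm \<Omega> (\<lambda>x. u x - v x)"
proof -
  obtain L where L: "\<forall>u v. continuous_on \<Omega> u \<longrightarrow> continuous_on \<Omega> v \<longrightarrow>
          supnorm \<Omega> (\<lambda>x. f u x - f v x) \<le> L * supnorm \<Omega> (\<lambda>x. u x - v x)"
    using assms(1) unfolding admissible_f_def by blast
  have fc: "\<And>u. continuous_on \<Omega> u \<Longrightarrow> continuous_on \<Omega> (f u)"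
    using assms(1) unfolding admissible_f_def by blast
  show ?thesis
  proof (intro exI[of _ "\<bar>L\<bar> + 1"] conjI allI impI)
    fix u v :: "'a \<Rightarrow> real" and x assume u: "continuous_on \<Omega> u" and v: "continuous_on \<Omega> v" and x: "x \<in> \<Omega>"
    have c1: "continuous_on \<Omega> (\<lambda>x. f u x - f v x)" using fc u v by (intro continuous_intros)
    have c2: "continuous_on \<Omega> (\<lambda>x. u x - v x)" using u v by (intro continuous_intros)
    have S: "0 \<le> supnorm \<Omega> (\<lambda>x. u x - v x)" using sn_nonneg[OF assms(2,3) c2] .
    have "\<bar>f u x - f v x\<bar> \<le> supnorm \<Omega> (\<lambda>x. f u x - f v x)" using sn_ge[OF assms(2) c1 x] by simp
    also have "\<dots> \<le> L * supnorm \<Omega> (\<lambda>x. u x - v x)" using L u v by blast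
    also have "\<dots> \<le> (\<bar>L\<bar> + 1) * supnorm \<Omega> (\<lambda>x. u x - v x)"
      using S by (intro mult_right_mono) auto
    finally show "\<bar>f u x - f v x\<bar> \<le> (\<bar>L\<bar> + 1) * supnorm \<Omega> (\<lambda>x. u x - v x)" .
  qed simp
qed

lemma f_cong:
  fixes f :: "('a::topological_space \<Rightarrow> real) \<Rightarrow> ('a \<Rightarrow> real)"
  assumes "admissible_f \<Omega> f" "compact \<Omega>" "\<Omega> \<noteq> {}"
    "continuous_on \<Omega> u" "continuous_on \<Omega> v" "\<forall>y\<in>\<Omega>. u y = v y" "x \<in> \<Omega>"
  shows "f u x = f v x"
proof -
  obtain K where K: "K > 0" "\<forall>u v x. continuous_on \<Omega> u \<longrightarrow> continuous_on \<Omega> v \<longrightarrow> x \<in> \<Omega> \<longrightarrow>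
            \<bar>f u x - f v x\<bar> \<le> K * supnorm \<Omega> (\<lambda>x. u x - v x)"
    using f_lip[OF assms(1-3)] by blast
  have "supnorm \<Omega> (\<lambda>x. u x - v x) \<le> 0" using assms(6) by (intro sn_le[OF assms(3)]) auto
  then have "K * supnorm \<Omega> (\<lambda>x. u x - v x) \<le> 0" using K(1) by (simp add: mult_nonneg_nonpos)
  then show ?thesis using K(2) assms(4,5,7) by force
qed

lemma f_mono:
  assumes "admissible_f \<Omega> f" "continuous_on \<Omega> u" "continuous_on \<Omega> v" "\<forall>y\<in>\<Omega>. u y \<le> v y" "x \<in> \<Omega>"
  shows "f v x \<le> f u x"
  using assms unfolding admissible_f_def by blast

lemma f_pos:
  assumes "admissible_f \<Omega> f" "continuous_on \<Omega> u" "x \<in> \<Omega>"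
  shows "0 < f u x"
  using assms unfolding admissible_f_def by blast

lemma f_cont:
  assumes "admissible_f \<Omega> f" "continuous_on \<Omega> u"
  shows "continuous_on \<Omega> (f u)"
  using assms unfolding admissible_f_def by blast

theorem lemma3p8:
  fixes \<Omega> :: "'a::euclidean_space set"
    and f :: "('a \<Rightarrow> real) \<Rightarrow> ('a \<Rightarrow> real)"
    and \<phi> A \<tau> :: "real \<Rightarrow> 'a \<Rightarrow> real"
    and \<tau>\<^sub>0 :: "'a \<Rightarrow> real"
    and r :: ereal
    and M :: real
  assumes \<Omega>: "compact \<Omega>"
    and f: "admissible_f \<Omega> f"
    and \<phi>: "cont_into_C {..0} \<Omega> \<phi>"
    and \<tau>0: "continuous_on \<Omega> \<tau>\<^sub>0" "\<forall>x\<in>\<Omega>. 0 \<le> \<tau>\<^sub>0 x"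
    and r: "0 < r"
    and A: "cont_into_C {t. ereal t < r} \<Omega> A"
    and A\<phi>: "\<forall>t\<le>0. \<forall>x\<in>\<Omega>. A t x = \<phi> t x"
    and \<tau>C: "\<forall>t. 0 \<le> t \<and> ereal t < r \<longrightarrow> continuous_on \<Omega> (\<tau> t)"
    and \<tau>pos: "\<forall>t. 0 \<le> t \<and> ereal t < r \<longrightarrow> (\<forall>x\<in>\<Omega>. 0 \<le> \<tau> t x)"
    and \<tau>eq: "\<forall>t. 0 \<le> t \<and> ereal t < r \<longrightarrow> (\<forall>x\<in>\<Omega>.
               integral {t - \<tau> t x..t} (\<lambda>s. f (A s) x) = integral {- \<tau>\<^sub>0 x..0} (\<lambda>s. f (\<phi> s) x))"
    and M: "0 < M"
    and AM: "\<forall>t. 0 \<le> t \<and> ereal t < r \<longrightarrow> supnorm \<Omega> (A t) \<le> M"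
  shows "let \<tau>0inf = (SUP x\<in>\<Omega>. \<tau>\<^sub>0 x);
             \<phi>max = (SUP t\<in>{- \<tau>0inf..0}. supnorm \<Omega> (\<phi> t));
             M1 = max M \<phi>max;
             \<tau>min = (INF x\<in>\<Omega>. \<tau>\<^sub>0 x * f (\<lambda>_. \<phi>max) x) / (SUP x\<in>\<Omega>. f (\<lambda>_. - M1) x);
             \<tau>max = (SUP x\<in>\<Omega>. \<tau>\<^sub>0 x * f (\<lambda>_. - \<phi>max) x) / (INF x\<in>\<Omega>. f (\<lambda>_. M1) x)
         in \<forall>t. 0 \<le> t \<and> ereal t < r \<longrightarrow> (\<forall>x\<in>\<Omega>. 0 \<le> \<tau>min \<and> \<tau>min \<le> \<tau> t x \<and> \<tau> t x \<le> \<tau>max)"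
proof (cases "\<Omega> = {}")
  case True
  then show ?thesis by (simp add: Let_def)
next
  case False
  note Wne = False
  have Acont: "\<And>s. ereal s < r \<Longrightarrow> continuous_on \<Omega> (A s)" using A unfolding cont_into_C_def by auto
  have \<phi>cont: "\<And>s. s \<le> 0 \<Longrightarrow> continuous_on \<Omega> (\<phi> s)" using \<phi> unfolding cont_into_C_def by auto
  have cc: "\<And>c. continuous_on \<Omega> (\<lambda>_::'a. c::real)" by simp
  define T where "T = (SUP x\<in>\<Omega>. \<tau>\<^sub>0 x)"
  have bddT: "bdd_above (\<tau>\<^sub>0 ` \<Omega>)" by (rule bdd_cont(1)[OF \<Omega> \<tau>0(1)])
  have Tge: "\<And>x. x \<in> \<Omega> \<Longrightarrow> \<tau>\<^sub>0 x \<le> T" unfolding T_def using bddT by (rule cSUP_upper2) auto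
  define g where "g t = supnorm \<Omega> (\<phi> t)" for t
  have gdiff: "\<bar>g s - g t\<bar> \<le> supnorm \<Omega> (\<lambda>y. \<phi> s y - \<phi> t y)" if "s \<le> 0" "t \<le> 0" for s t
  proof -
    have "g s \<le> g t + supnorm \<Omega> (\<lambda>y. \<phi> s y - \<phi> t y)"
      unfolding g_def using sn_tri[OF \<Omega> Wne \<phi>cont \<phi>cont] that by blast
    moreover have "g t \<le> g s + supnorm \<Omega> (\<lambda>y. \<phi> t y - \<phi> s y)"
      unfolding g_def using sn_tri[OF \<Omega> Wne \<phi>cont \<phi>cont] that by blast
    moreover have "supnorm \<Omega> (\<lambda>y. \<phi> t y - \<phi> s y) = supnorm \<Omega> (\<lambda>y. \<phi> s y - \<phi> t y)"
      unfolding supnorm_def by (simp add: abs_minus_commute)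
    ultimately show ?thesis by linarith
  qed
  have gcont: "continuous_on {..0} g"
    unfolding continuous_on_iff dist_real_def
  proof (intro ballI allI impI)
    fix t e assume t: "t \<in> {..(0::real)}" and e: "(0::real) < e"
    obtain d where d: "d > 0" "\<forall>s\<in>{..0}. \<bar>s - t\<bar> < d \<longrightarrow> supnorm \<Omega> (\<lambda>y. \<phi> s y - \<phi> t y) < e"
      using \<phi> t e unfolding cont_into_C_def by blast
    show "\<exists>d>0. \<forall>s\<in>{..0}. \<bar>s - t\<bar> < d \<longrightarrow> \<bar>g s - g t\<bar> < e"
      using d gdiff t by (meson atMost_iff le_less_trans)
  qed
  define P where "P = (SUP t\<in>{- T..0}. g t)"
  have bddP: "bdd_above (g ` {-T..0})"
    by (rule bdd_cont(1)[OF compact_Icc continuous_on_subset[OF gcont]]) auto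
  have Pge: "\<And>s y. s \<in> {-T..0} \<Longrightarrow> y \<in> \<Omega> \<Longrightarrow> \<bar>\<phi> s y\<bar> \<le> P"
  proof -
    fix s y assume s: "s \<in> {-T..0}" and y: "y \<in> \<Omega>"
    have "\<bar>\<phi> s y\<bar> \<le> g s" unfolding g_def using sn_ge[OF \<Omega> \<phi>cont y] s by auto
    also have "g s \<le> P" unfolding P_def using bddP s by (rule cSUP_upper2) auto
    finally show "\<bar>\<phi> s y\<bar> \<le> P" .
  qed
  define M1 where "M1 = max M P"
  have r0: "ereal s < r" if "s \<le> 0" for s :: real
  proof -
    have "ereal s \<le> 0" using that by (simp add: zero_ereal_def)
    then show ?thesis using r by (rule le_less_trans)
  qed
  have Aphi: "\<And>s y. s \<le> 0 \<Longrightarrow> y \<in> \<Omega> \<Longrightarrow> A s y = \<phi> s y" using A\<phi> by blast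
  have Abnd: "\<bar>A s y\<bar> \<le> M1" if "-T \<le> s" "ereal s < r" "y \<in> \<Omega>" for s y
  proof (cases "0 \<le> s")
    case True
    have "\<bar>A s y\<bar> \<le> supnorm \<Omega> (A s)" using sn_ge[OF \<Omega> Acont[OF that(2)] that(3)] .
    also have "\<dots> \<le> M" using AM True that(2) by blast
    finally show ?thesis unfolding M1_def by linarith
  next
    case False
    then have "\<bar>A s y\<bar> \<le> P" using Aphi Pge that by auto
    then show ?thesis unfolding M1_def by linarith
  qed
  obtain K where K: "K > 0" "\<forall>u v x. continuous_on \<Omega> u \<longrightarrow> continuous_on \<Omega> v \<longrightarrow> x \<in> \<Omega> \<longrightarrow>
            \<bar>f u x - f v x\<bar> \<le> K * supnorm \<Omega> (\<lambda>x. u x - v x)"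
    using f_lip[OF f \<Omega> Wne] by blast
  have hcont: "continuous_on {s. ereal s < r} (\<lambda>s. f (A s) x)" if x: "x \<in> \<Omega>" for x
    unfolding continuous_on_iff dist_real_def
  proof (intro ballI allI impI)
    fix t e assume t: "t \<in> {s. ereal s < r}" and e: "(0::real) < e"
    obtain d where d: "d > 0" "\<forall>s\<in>{s. ereal s < r}. \<bar>s - t\<bar> < d \<longrightarrow> supnorm \<Omega> (\<lambda>y. A s y - A t y) < e / K"
    proof -
      have "e / K > 0" using e K(1) by simp
      moreover have "\<forall>t\<in>{s. ereal s < r}. \<forall>e>0. \<exists>d>0. \<forall>s\<in>{s. ereal s < r}. \<bar>s - t\<bar> < d \<longrightarrow> supnorm \<Omega> (\<lambda>x. A s x - A t x) < e"
        using A unfolding cont_into_C_def by blast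
      ultimately show ?thesis using t that by blast
    qed
    show "\<exists>d>0. \<forall>s\<in>{s. ereal s < r}. \<bar>s - t\<bar> < d \<longrightarrow> \<bar>f (A s) x - f (A t) x\<bar> < e"
    proof (intro exI[of _ d] conjI ballI impI)
      fix s assume s: "s \<in> {s. ereal s < r}" and sd: "\<bar>s - t\<bar> < d"
      have "\<bar>f (A s) x - f (A t) x\<bar> \<le> K * supnorm \<Omega> (\<lambda>y. A s y - A t y)"
        using K(2) Acont s t x by auto
      also have "\<dots> < K * (e / K)"
      proof -
        have "supnorm \<Omega> (\<lambda>y. A s y - A t y) < e / K" using d s sd by blast
        then show ?thesis using K(1) by (rule mult_strict_left_mono)
      qed
      also have "\<dots> = e" using K(1) by simp
      finally show "\<bar>f (A s) x - f (A t) x\<bar> < e" .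
    qed (use d in auto)
  qed
  have hphi: "f (A s) x = f (\<phi> s) x" if "s \<le> 0" "x \<in> \<Omega>" for s x
    by (rule f_cong[OF f \<Omega> Wne Acont[OF r0[OF that(1)]] \<phi>cont[OF that(1)]]) (use that Aphi in auto)
  define tmin where "tmin = (INF x\<in>\<Omega>. \<tau>\<^sub>0 x * f (\<lambda>_. P) x) / (SUP x\<in>\<Omega>. f (\<lambda>_. - M1) x)"
  define tmax where "tmax = (SUP x\<in>\<Omega>. \<tau>\<^sub>0 x * f (\<lambda>_. - P) x) / (INF x\<in>\<Omega>. f (\<lambda>_. M1) x)"
  have main: "0 \<le> tmin \<and> tmin \<le> \<tau> t x \<and> \<tau> t x \<le> tmax"
    if t: "0 \<le> t" "ereal t < r" and x: "x \<in> \<Omega>" for t x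
  proof -
    define a where "a = t - \<tau> t x"
    define b where "b = - \<tau>\<^sub>0 x"
    define h where "h s = f (A s) x" for s
    have tau0: "0 \<le> \<tau> t x" using \<tau>pos t x by blast
    have b0: "b \<le> 0" unfolding b_def using \<tau>0(2) x by auto
    have rt: "ereal s < r" if "s \<le> t" for s
      using that t(2) by (metis ereal_less_eq(3) le_less_trans)
    have hc: "continuous_on {u..v} h" if "v \<le> t" for u v
      unfolding h_def by (rule continuous_on_subset[OF hcont[OF x]])
        (use that rt in auto)
    have hi: "h integrable_on {u..v}" if "v \<le> t" for u v
      using hc[OF that] integrable_continuous_real by blast
    have eq: "integral {a..t} h = integral {b..0} (\<lambda>s. f (\<phi> s) x)"
      using \<tau>eq t x unfolding a_def b_def h_def by blast
    have eq2: "integral {b..0} (\<lambda>s. f (\<phi> s) x) = integral {b..0} h"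
      unfolding h_def by (rule integral_cong) (use hphi x in auto)
    have ab: "b \<le> a"
    proof (rule ccontr)
      assume "\<not> b \<le> a"
      then have ab: "a < b" by simp
      have "integral {a..b} h + integral {b..t} h = integral {a..t} h"
        using Henstock_Kurzweil_Integration.integral_combine[of a b t h] ab b0 t(1) hi[of t a] by simp
      moreover have "integral {b..0} h + integral {0..t} h = integral {b..t} h"
        using Henstock_Kurzweil_Integration.integral_combine[of b 0 t h] b0 t(1) hi[of t b] by simp
      moreover have "0 \<le> integral {0..t} h"
        by (rule integral_nonneg[OF hi]) (auto simp: h_def intro: less_imp_le f_pos[OF f Acont x] rt)
      moreover have "integral {a..b} (\<lambda>_. 0) < integral {a..b} h"
        by (rule integral_less_real) (use ab b0 t hc in \<open>auto simp: h_def intro!: f_pos[OF f Acont x] rt\<close>)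
      ultimately show False using eq eq2 by simp
    qed
    have hb: "-M1 \<le> A s y \<and> A s y \<le> M1" if "s \<in> {a..t}" "y \<in> \<Omega>" for s y
    proof -
      have "-T \<le> s" using that ab Tge[OF x] unfolding b_def by auto
      moreover have "ereal s < r" using that rt by auto
      ultimately show ?thesis using Abnd that(2) by fastforce
    qed
    have pb: "-P \<le> \<phi> s y \<and> \<phi> s y \<le> P" if "s \<in> {b..0}" "y \<in> \<Omega>" for s y
      using Pge[of s y] that Tge[OF x] unfolding b_def by auto
    have \<phi>i: "(\<lambda>s. f (\<phi> s) x) integrable_on {b..0}"
      using integrable_eq[OF hi[OF t(1)]] hphi x unfolding h_def by auto
    have "integral {a..t} h \<le> integral {a..t} (\<lambda>_. f (\<lambda>_. - M1) x)"
    proof (rule integral_le[OF hi])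
      fix s assume s: "s \<in> {a..t}"
      have "f (A s) x \<le> f (\<lambda>_. - M1) x"
        by (rule f_mono[OF f cc Acont[OF rt] _ x]) (use s hb in auto)
      then show "h s \<le> f (\<lambda>_. - M1) x" by (simp add: h_def)
    qed auto
    then have L1: "integral {a..t} h \<le> \<tau> t x * f (\<lambda>_. - M1) x" using tau0 by (simp add: a_def)
    have "integral {a..t} (\<lambda>_. f (\<lambda>_. M1) x) \<le> integral {a..t} h"
    proof (rule integral_le[OF _ hi])
      fix s assume s: "s \<in> {a..t}"
      have "f (\<lambda>_. M1) x \<le> f (A s) x"
        by (rule f_mono[OF f Acont[OF rt] cc _ x]) (use s hb in auto)
      then show "f (\<lambda>_. M1) x \<le> h s" by (simp add: h_def)
    qed auto
    then have U1: "\<tau> t x * f (\<lambda>_. M1) x \<le> integral {a..t} h" using tau0 by (simp add: a_def)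
    have "integral {b..0} (\<lambda>_. f (\<lambda>_. P) x) \<le> integral {b..0} (\<lambda>s. f (\<phi> s) x)"
    proof (rule integral_le[OF _ \<phi>i])
      fix s assume s: "s \<in> {b..0}"
      show "f (\<lambda>_. P) x \<le> f (\<phi> s) x"
        by (rule f_mono[OF f \<phi>cont cc _ x]) (use s pb in auto)
    qed auto
    then have L2: "\<tau>\<^sub>0 x * f (\<lambda>_. P) x \<le> integral {b..0} (\<lambda>s. f (\<phi> s) x)" using b0 by (simp add: b_def)
    have "integral {b..0} (\<lambda>s. f (\<phi> s) x) \<le> integral {b..0} (\<lambda>_. f (\<lambda>_. -P) x)"
    proof (rule integral_le[OF \<phi>i])
      fix s assume s: "s \<in> {b..0}"
      show "f (\<phi> s) x \<le> f (\<lambda>_. -P) x"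
        by (rule f_mono[OF f cc \<phi>cont _ x]) (use s pb in auto)
    qed auto
    then have U2: "integral {b..0} (\<lambda>s. f (\<phi> s) x) \<le> \<tau>\<^sub>0 x * f (\<lambda>_. -P) x" using b0 by (simp add: b_def)
    have c1: "continuous_on \<Omega> (\<lambda>y. \<tau>\<^sub>0 y * f (\<lambda>_. P) y)"
      using \<tau>0(1) f_cont[OF f cc] by (intro continuous_intros)
    have c2: "continuous_on \<Omega> (\<lambda>y. \<tau>\<^sub>0 y * f (\<lambda>_. -P) y)"
      using \<tau>0(1) f_cont[OF f cc] by (intro continuous_intros)
    have I1: "(INF y\<in>\<Omega>. \<tau>\<^sub>0 y * f (\<lambda>_. P) y) \<le> \<tau>\<^sub>0 x * f (\<lambda>_. P) x"
      by (rule cINF_lower[OF bdd_cont(2)[OF \<Omega> c1] x])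
    have I1pos: "0 \<le> (INF y\<in>\<Omega>. \<tau>\<^sub>0 y * f (\<lambda>_. P) y)"
      by (rule cINF_greatest[OF Wne]) (use \<tau>0(2) f_pos[OF f cc] in \<open>auto intro!: mult_nonneg_nonneg intro: less_imp_le\<close>)
    have S1: "f (\<lambda>_. - M1) x \<le> (SUP y\<in>\<Omega>. f (\<lambda>_. - M1) y)"
      by (rule cSUP_upper[OF x bdd_cont(1)[OF \<Omega> f_cont[OF f cc]]])
    have S1pos: "0 < (SUP y\<in>\<Omega>. f (\<lambda>_. - M1) y)" using S1 f_pos[OF f cc x, of "- M1"] by linarith
    have S2: "\<tau>\<^sub>0 x * f (\<lambda>_. -P) x \<le> (SUP y\<in>\<Omega>. \<tau>\<^sub>0 y * f (\<lambda>_. -P) y)"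
      by (rule cSUP_upper[OF x bdd_cont(1)[OF \<Omega> c2]])
    obtain y0 where y0: "y0 \<in> \<Omega>" "\<forall>y\<in>\<Omega>. f (\<lambda>_. M1) y0 \<le> f (\<lambda>_. M1) y"
      using continuous_attains_inf[OF \<Omega> Wne f_cont[OF f cc]] by blast
    have I2pos: "0 < (INF y\<in>\<Omega>. f (\<lambda>_. M1) y)"
    proof -
      have "f (\<lambda>_. M1) y0 \<le> (INF y\<in>\<Omega>. f (\<lambda>_. M1) y)"
        by (rule cINF_greatest[OF Wne]) (use y0 in auto)
      then show ?thesis using f_pos[OF f cc y0(1), of M1] by linarith
    qed
    have I2: "(INF y\<in>\<Omega>. f (\<lambda>_. M1) y) \<le> f (\<lambda>_. M1) x"
      by (rule cINF_lower[OF bdd_cont(2)[OF \<Omega> f_cont[OF f cc]] x])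
    have "0 \<le> tmin" unfolding tmin_def using I1pos S1pos by simp
    moreover have "tmin \<le> \<tau> t x"
    proof -
      have "\<tau> t x * f (\<lambda>_. - M1) x \<le> \<tau> t x * (SUP y\<in>\<Omega>. f (\<lambda>_. - M1) y)"
        using S1 tau0 by (rule mult_left_mono)
      then show ?thesis unfolding tmin_def using S1pos I1 L1 L2 eq
        by (simp add: divide_le_eq)
    qed
    moreover have "\<tau> t x \<le> tmax"
    proof -
      have "\<tau> t x * (INF y\<in>\<Omega>. f (\<lambda>_. M1) y) \<le> \<tau> t x * f (\<lambda>_. M1) x"
        using I2 tau0 by (rule mult_left_mono)
      then show ?thesis unfolding tmax_def using I2pos S2 U1 U2 eq
        by (simp add: le_divide_eq)
    qed
    ultimately show ?thesis by blast
  qed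
  show ?thesis
    unfolding Let_def T_def[symmetric] g_def[symmetric] P_def[symmetric] M1_def[symmetric]
      tmin_def[symmetric] tmax_def[symmetric]
    using main by blast
qed

end
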